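(* Let $\Gamma$ be the first Grigorchuk group with generators $a,b,c,d$, acting on the right on $\{0,1\}^{\mathbb N}$, and let $\rho=111\cdots$. For a word $w=w_1\cdots w_n$ over $\{a,b,c,d\}$ set $\delta(w)=\#\{\rho\,w_{i+1}\cdots w_n: i=0,\dots,n\}$, and let $\Delta(n)=\max\{\delta(w): w\text{ a word over }\{a,b,c,d\},\ |w|=n\}$. Let $\eta$ be the real root of $t^3+t^2+t-2$ and $\alpha=\log 2/\log(2/\eta)$. Then $\Delta(n)\preceq n^\alpha$.
   Context: The first Grigorchuk group $\Gamma$ is the group of permutations of $\{0,1\}^{\mathbb N}$ (acting on the right) generated by $a,b,c,d$, defined recursively for $x\in\{0,1\}$ and infinite binary sequences $u$ by: $(xu)a=(1-x)u$; $(0u)b=0(ua)$, $(1u)b=1(uc)$; $(0u)c=0(ua)$, $(1u)c=1(ud)$; $(0u)d=0u$, $(1u)d=1(ub)$. For functions $f,g:\mathbb N\to\mathbb R_+$, $g\preceq f$ means there is $C>0$ with $g(n)\le f(Cn)$ for all sufficiently large $n$. *)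

theory Defs
  imports Complex_Main
begin

datatype gen = GA | GB | GC | GD

text \<open>States of the defining automaton (the generators plus the identity SE).
  Binary digits: False = 0, True = 1.\<close>
datatype st = SA | SB | SC | SD | SE

fun st_of :: "gen \<Rightarrow> st" where
  "st_of GA = SA" | "st_of GB = SB" | "st_of GC = SC" | "st_of GD = SD"

fun st_out :: "st \<Rightarrow> bool \<Rightarrow> bool" where
  "st_out SA x = (\<not> x)"
| "st_out _ x = x"

text \<open>Next state after state q reads letter x:
  (xu)a = (1-x)u; (0u)b = 0(ua), (1u)b = 1(uc); (0u)c = 0(ua), (1u)c = 1(ud);
  (0u)d = 0u, (1u)d = 1(ub).\<close>
fun st_next :: "st \<Rightarrow> bool \<Rightarrow> st" where
  "st_next SA _ = SE"
| "st_next SB x = (if x then SC else SA)"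
| "st_next SC x = (if x then SD else SA)"
| "st_next SD x = (if x then SB else SE)"
| "st_next SE _ = SE"

fun st_at :: "st \<Rightarrow> (nat \<Rightarrow> bool) \<Rightarrow> nat \<Rightarrow> st" where
  "st_at q u 0 = q"
| "st_at q u (Suc k) = st_next (st_at q u k) (u k)"

definition act :: "(nat \<Rightarrow> bool) \<Rightarrow> gen \<Rightarrow> (nat \<Rightarrow> bool)" where
  "act u g = (\<lambda>k. st_out (st_at (st_of g) u k) (u k))"

definition act_word :: "(nat \<Rightarrow> bool) \<Rightarrow> gen list \<Rightarrow> (nat \<Rightarrow> bool)" where
  "act_word u w = foldl act u w"

definition rho :: "nat \<Rightarrow> bool" where
  "rho = (\<lambda>_. True)"

definition delta :: "gen list \<Rightarrow> nat" where
  "delta w = card {act_word rho (drop i w) | i. i \<le> length w}"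

definition Delta :: "nat \<Rightarrow> nat" where
  "Delta n = Max {delta w | w. length w = n}"

end

theory Submission
  imports Defs "HOL-Analysis.Convex"
begin


definition acts :: "(nat \<Rightarrow> bool) \<Rightarrow> st \<Rightarrow> (nat \<Rightarrow> bool)" where
  "acts u q = (\<lambda>k. st_out (st_at q u k) (u k))"

definition stl :: "(nat \<Rightarrow> bool) \<Rightarrow> (nat \<Rightarrow> bool)" where
  "stl u = (\<lambda>k. u (Suc k))"

lemma st_at_Suc': "st_at q u (Suc k) = st_at (st_next q (u 0)) (stl u) k"
  by (induction k) (auto simp: stl_def)

lemma acts_0[simp]: "acts u q 0 = st_out q (u 0)"
  by (simp add: acts_def)

lemma stl_acts: "stl (acts u q) = acts (stl u) (st_next q (u 0))"
  by (simp only: stl_def acts_def st_at_Suc')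

lemma st_at_SE[simp]: "st_at SE u k = SE"
  by (induction k) auto

lemma acts_SE[simp]: "acts u SE = u"
  by (simp add: acts_def)

lemma st_at_SA: "st_at SA u (Suc k) = SE"
  by (subst st_at_Suc') simp

lemma st_at_SA': "st_at SA u k = (if k = 0 then SA else SE)"
  by (cases k) (simp_all del: st_at.simps(2) add: st_at_SA)

lemma acts_SA: "acts u SA = (\<lambda>k. if k = 0 then \<not> u 0 else u k)"
  by (auto simp: acts_def fun_eq_iff st_at_SA')

lemma acts_SA_SA[simp]: "acts (acts u SA) SA = u"
  by (auto simp: acts_SA fun_eq_iff)

fun kmul :: "st \<Rightarrow> st \<Rightarrow> st" where
  "kmul SE q = q" | "kmul q SE = q" | "kmul SB SB = SE" | "kmul SB SC = SD" | "kmul SB SD = SC"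
| "kmul SC SB = SD" | "kmul SC SC = SE" | "kmul SC SD = SB" | "kmul SD SB = SC" | "kmul SD SC = SB"
| "kmul SD SD = SE" | "kmul _ _ = SA"

lemma kmul_nA: "q \<noteq> SA \<Longrightarrow> r \<noteq> SA \<Longrightarrow> kmul q r \<noteq> SA"
  by (cases q; cases r) auto


lemma next_kmul_T: "q \<noteq> SA \<Longrightarrow> r \<noteq> SA \<Longrightarrow> st_next (kmul q r) True = kmul (st_next q True) (st_next r True)"
  by (cases q; cases r) simp_all

lemma next_nA_T: "q \<noteq> SA \<Longrightarrow> st_next q True \<noteq> SA"
  by (cases q) simp_all

lemma next_kmul_F: "q \<noteq> SA \<Longrightarrow> r \<noteq> SA \<Longrightarrow> acts (acts v (st_next q False)) (st_next r False) = acts v (st_next (kmul q r) False)"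
  by (cases q; cases r) simp_all

lemma acts_kmul_k: "\<forall>(u::nat\<Rightarrow>bool) q r. q \<noteq> SA \<longrightarrow> r \<noteq> SA \<longrightarrow> acts (acts u q) r k = acts u (kmul q r) k"
proof (induction k)
  case 0
  show ?case
  proof (intro allI impI)
    fix u :: "nat\<Rightarrow>bool" and q r assume "q \<noteq> SA" "r \<noteq> SA"
    then show "acts (acts u q) r 0 = acts u (kmul q r) 0" by (cases q; cases r) simp_all
  qed
next
  case (Suc k)
  show ?case
  proof (intro allI impI)
    fix u :: "nat\<Rightarrow>bool" and q r assume q: "q \<noteq> SA" and r: "r \<noteq> SA"
    have h0: "st_out q (u 0) = u 0" using q by (cases q) auto
    have L: "acts (acts u q) r (Suc k) = acts (acts (stl u) (st_next q (u 0))) (st_next r (u 0)) k"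
    proof -
      have "acts (acts u q) r (Suc k) = stl (acts (acts u q) r) k" by (simp add: stl_def)
      also have "\<dots> = acts (acts (stl u) (st_next q (u 0))) (st_next r (u 0)) k"
        by (simp add: stl_acts h0)
      finally show ?thesis .
    qed
    have R: "acts u (kmul q r) (Suc k) = acts (stl u) (st_next (kmul q r) (u 0)) k"
    proof -
      have "acts u (kmul q r) (Suc k) = stl (acts u (kmul q r)) k" by (simp add: stl_def)
      also have "\<dots> = acts (stl u) (st_next (kmul q r) (u 0)) k" by (simp only: stl_acts)
      finally show ?thesis .
    qed
    show "acts (acts u q) r (Suc k) = acts u (kmul q r) (Suc k)"
    proof (cases "u 0")
      case True
      have eq: "acts (acts (stl u) (st_next q True)) (st_next r True) k
            = acts (stl u) (kmul (st_next q True) (st_next r True)) k"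
        by (rule Suc.IH[rule_format, OF next_nA_T[OF q] next_nA_T[OF r]])
      have u0: "u 0 = True" using True by simp
      show ?thesis unfolding L R u0 next_kmul_T[OF q r] by (rule eq)
    next
      case False
      then have u0: "u 0 = False" by simp
      show ?thesis unfolding L R u0 by (simp only: next_kmul_F[OF q r])
    qed
  qed
qed

lemma acts_kmul: "q \<noteq> SA \<Longrightarrow> r \<noteq> SA \<Longrightarrow> acts (acts u q) r = acts u (kmul q r)"
  using acts_kmul_k by blast

lemma st_at_rho: "q \<noteq> SA \<Longrightarrow> st_at q rho k \<noteq> SA"
  by (induction k) (auto simp: rho_def elim: st_next.elims)

lemma st_out_T: "q \<noteq> SA \<Longrightarrow> st_out q True"
  by (cases q) auto

lemma acts_rho: "q \<noteq> SA \<Longrightarrow> acts rho q = rho"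
  using st_at_rho[of q] st_out_T
  by (auto simp: acts_def fun_eq_iff rho_def)



fun sec :: "bool \<Rightarrow> st list \<Rightarrow> st list" where
  "sec x [] = []"
| "sec x (q # qs) = st_next q x # sec (st_out q x) qs"

fun outb :: "bool \<Rightarrow> st list \<Rightarrow> bool" where
  "outb x [] = x"
| "outb x (q # qs) = outb (st_out q x) qs"

lemma length_sec[simp]: "length (sec x qs) = length qs"
  by (induction qs arbitrary: x) auto

lemma sec_append: "sec x (xs @ ys) = sec x xs @ sec (outb x xs) ys"
  by (induction xs arbitrary: x) auto

lemma outb_append: "outb x (xs @ ys) = outb (outb x xs) ys"
  by (induction xs arbitrary: x) auto

lemma st_out_neg: "st_out q (\<not> x) = (\<not> st_out q x)"
  by (cases q) auto

lemma outb_neg: "outb (\<not> x) xs = (\<not> outb x xs)"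
  by (induction xs arbitrary: x) (simp_all add: st_out_neg)

lemma outb_iff: "outb x xs = (x = outb True xs)"
  using outb_neg[of True xs] by (cases x) simp_all

lemma foldl_acts_0: "foldl acts u qs 0 = outb (u 0) qs"
  by (induction qs arbitrary: u) auto

lemma stl_foldl_acts: "stl (foldl acts u qs) = foldl acts (stl u) (sec (u 0) qs)"
  by (induction qs arbitrary: u) (auto simp: stl_acts)

definition P :: "st list \<Rightarrow> (nat \<Rightarrow> bool) set" where
  "P qs = {foldl acts rho (drop i qs) | i. i \<le> length qs}"

lemma P_image: "P qs = (\<lambda>i. foldl acts rho (drop i qs)) ` {..length qs}"
  by (auto simp: P_def)

lemma finite_P: "finite (P qs)"
  by (simp add: P_image)

lemma rho0: "rho k = True"
  by (simp add: rho_def)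

lemma stl_rho[simp]: "stl rho = rho"
  by (simp add: stl_def rho_def)

definition cons_b :: "bool \<times> (nat \<Rightarrow> bool) \<Rightarrow> (nat \<Rightarrow> bool)" where
  "cons_b p = (\<lambda>k. if k = 0 then fst p else snd p (k - 1))"

lemma cons_b_eq: "cons_b (f 0, stl f) = f"
  by (auto simp: cons_b_def stl_def fun_eq_iff)

lemma P_sub: "P qs \<subseteq> cons_b ` ((\<lambda>t. (outb True qs, t)) ` P (sec True qs) \<union> (\<lambda>t. (outb False qs, t)) ` P (sec False qs))"
proof
  fix p assume "p \<in> P qs"
  then obtain i where i: "i \<le> length qs" and p: "p = foldl acts rho (drop i qs)"
    by (auto simp: P_def)
  define y where "y = outb True (take i qs)"
  have oy: "outb y (take i qs) = True" using outb_iff[of y "take i qs"] by (simp add: y_def)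
  have "sec y qs = sec y (take i qs) @ sec True (drop i qs)"
    using sec_append[of y "take i qs" "drop i qs"] oy by simp
  then have d: "drop i (sec y qs) = sec True (drop i qs)"
    using i by simp
  have p0: "p 0 = outb y qs"
    using p outb_append[of y "take i qs" "drop i qs"] oy by (simp add: foldl_acts_0 rho_def)
  have "stl p = foldl acts rho (sec True (drop i qs))"
    using p stl_foldl_acts[of rho "drop i qs"] by (simp add: rho0)
  also have "\<dots> = foldl acts rho (drop i (sec y qs))" using d by simp
  finally have "stl p \<in> P (sec y qs)" using i by (auto simp: P_def)
  then have "(p 0, stl p) \<in> (\<lambda>t. (outb True qs, t)) ` P (sec True qs) \<union> (\<lambda>t. (outb False qs, t)) ` P (sec False qs)"
    using p0 by (cases y) auto
  moreover have "p = cons_b (p 0, stl p)" using cons_b_eq[of p] by simp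
  ultimately show "p \<in> cons_b ` ((\<lambda>t. (outb True qs, t)) ` P (sec True qs) \<union> (\<lambda>t. (outb False qs, t)) ` P (sec False qs))"
    by (rule image_eqI[rotated])
qed

lemma card_P_rec: "card (P qs) \<le> card (P (sec True qs)) + card (P (sec False qs))"
proof -
  let ?A = "(\<lambda>t. (outb True qs, t)) ` P (sec True qs)"
  let ?B = "(\<lambda>t. (outb False qs, t)) ` P (sec False qs)"
  have "card (P qs) \<le> card (cons_b ` (?A \<union> ?B))"
    by (rule card_mono) (simp_all add: finite_P P_sub)
  also have "\<dots> \<le> card (?A \<union> ?B)" by (rule card_image_le) (auto intro: finite_P)
  also have "\<dots> \<le> card ?A + card ?B" by (rule card_Un_le)
  also have "\<dots> \<le> card (P (sec True qs)) + card (P (sec False qs))"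
    by (intro add_mono card_image_le finite_P)
  finally show ?thesis .
qed

fun red :: "st \<Rightarrow> st list \<Rightarrow> st list" where
  "red a [] = [a]"
| "red a (q # qs) = (if q = SA then a # SA # red SE qs else red (kmul a q) qs)"

lemma foldl_red: "a \<noteq> SA \<Longrightarrow> foldl acts u (red a qs) = foldl acts (acts u a) qs"
proof (induction qs arbitrary: a u)
  case Nil then show ?case by simp
next
  case (Cons q qs)
  show ?case
  proof (cases "q = SA")
    case True
    then show ?thesis using Cons.IH[of SE] by simp
  next
    case False
    then show ?thesis using Cons.IH[of "kmul a q"] Cons.prems kmul_nA by (simp add: acts_kmul)
  qed
qed

lemma P_red_aux: "a \<noteq> SA \<Longrightarrow> i \<le> length qs \<Longrightarrow>
   \<exists>j \<le> length (red a qs). foldl acts rho (drop j (red a qs)) = foldl acts rho (drop i qs)"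
proof (induction qs arbitrary: a i)
  case Nil
  then show ?case by (intro exI[of _ 1]) auto
next
  case (Cons q qs)
  show ?case
  proof (cases "q = SA")
    case True
    show ?thesis
    proof (cases i)
      case 0
      have "foldl acts rho (drop 1 (red a (q # qs))) = foldl acts rho (q # qs)"
        using True foldl_red[of SE "acts rho SA" qs] by simp
      then show ?thesis using 0 True by (intro exI[of _ 1]) auto
    next
      case (Suc i')
      then obtain j where "j \<le> length (red SE qs)" "foldl acts rho (drop j (red SE qs)) = foldl acts rho (drop i' qs)"
        using Cons.IH[of SE i'] Cons.prems by auto
      then show ?thesis using True Suc by (intro exI[of _ "Suc (Suc j)"]) auto
    qed
  next
    case False
    have k: "kmul a q \<noteq> SA" using False Cons.prems kmul_nA by auto
    show ?thesis
    proof (cases i)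
      case 0
      obtain j where "j \<le> length (red (kmul a q) qs)" "foldl acts rho (drop j (red (kmul a q) qs)) = foldl acts rho qs"
        using Cons.IH[of "kmul a q" 0] k by auto
      then show ?thesis using False 0 acts_rho[OF False] by (intro exI[of _ j]) auto
    next
      case (Suc i')
      then show ?thesis using Cons.IH[of "kmul a q" i'] k Cons.prems False by auto
    qed
  qed
qed

lemma card_P_red: "card (P qs) \<le> card (P (red SE qs))"
proof (rule card_mono[OF finite_P])
  show "P qs \<subseteq> P (red SE qs)"
  proof
    fix x assume "x \<in> P qs"
    then obtain i where i: "i \<le> length qs" "x = foldl acts rho (drop i qs)" by (auto simp: P_def)
    then obtain j where "j \<le> length (red SE qs)" "foldl acts rho (drop j (red SE qs)) = x"
      using P_red_aux[of SE i qs] by auto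
    then show "x \<in> P (red SE qs)" by (auto simp: P_def)
  qed
qed

definition nA :: "st list \<Rightarrow> nat" where "nA qs = length (filter (\<lambda>q. q = SA) qs)"

lemma card_P_nA: "card (P qs) \<le> 1 + nA qs"
proof (induction qs)
  case Nil then show ?case by (simp add: P_def nA_def)
next
  case (Cons q qs)
  have e: "P (q # qs) = insert (foldl acts rho (q # qs)) (P qs)"
    unfolding P_image by (simp add: atMost_Suc_eq_insert_0 image_image)
  show ?case
  proof (cases "q = SA")
    case True
    then show ?thesis using e Cons card_insert_le_m1 by (simp add: nA_def card_insert_if finite_P)
  next
    case False
    have "foldl acts rho (q # qs) \<in> P qs"
      using acts_rho[OF False] by (auto simp: P_def intro: exI[of _ 0])
    then show ?thesis using e Cons False by (simp add: nA_def insert_absorb)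
  qed
qed



lemma foldl_act: "foldl act u w = foldl acts u (map st_of w)"
  by (induction w arbitrary: u) (simp_all add: act_def acts_def)

lemma delta_P: "delta w = card (P (map st_of w))"
proof -
  have "{act_word rho (drop i w) | i. i \<le> length w} = P (map st_of w)"
    by (simp add: P_def act_word_def foldl_act drop_map)
  then show ?thesis by (simp add: delta_def)
qed

lemma gen_UNIV: "finite (UNIV :: gen set)"
proof -
  have "UNIV = {GA, GB, GC, GD}" by (auto intro: gen.exhaust)
  then show ?thesis by (metis finite_insert finite.emptyI)
qed

locale grig =
  fixes e :: real
  assumes E: "e^3 + e^2 + e = 2" and lo: "0.8 < e" and hi: "e < 0.82"
begin

definition D where "D = 1 - e^3"

lemma e3: "e^3 < 0.6"
proof -
  have "e^3 < 0.82^3" using lo hi by (intro power_strict_mono) auto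
  moreover have "(0.82::real)^3 < 0.6" by (simp add: power3_eq_cube)
  ultimately show ?thesis by linarith
qed

lemma e3lo: "e^3 > 0.5"
proof -
  have "0.8^3 < e^3" using lo hi by (intro power_strict_mono) auto
  moreover have "(0.8::real)^3 > 0.5" by (simp add: power3_eq_cube)
  ultimately show ?thesis by linarith
qed

lemma e2lo: "e^2 > 0.64"
proof -
  have "0.8^2 < e^2" using lo hi by (intro power_strict_mono) auto
  moreover have "(0.8::real)^2 = 0.64" by (simp add: power2_eq_square)
  ultimately show ?thesis by linarith
qed

lemma e2hi: "e^2 < 0.7"
proof -
  have "e^2 < 0.82^2" using lo hi by (intro power_strict_mono) auto
  moreover have "(0.82::real)^2 < 0.7" by (simp add: power2_eq_square)
  ultimately show ?thesis by linarith
qed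

lemma Dpos: "D > 0" using e3 by (simp add: D_def)

definition w1 :: "st \<Rightarrow> real" where
  "w1 q = (case q of SA \<Rightarrow> 1 | SB \<Rightarrow> e^3 / D | SC \<Rightarrow> e / D - 1 | SD \<Rightarrow> e^2 / D - 1 | SE \<Rightarrow> 0)"

lemma w1_simps[simp]: "w1 SA = 1" "w1 SB = e^3 / D" "w1 SC = e / D - 1" "w1 SD = e^2 / D - 1" "w1 SE = 0"
  by (simp_all add: w1_def)

lemma wc_nn: "e / D - 1 \<ge> 0"
proof -
  have "D \<le> e" using e3lo lo by (simp add: D_def)
  then show ?thesis using Dpos by (simp add: field_simps)
qed

lemma wd_nn: "e^2 / D - 1 \<ge> 0"
proof -
  have "D \<le> e^2" using e3lo e2lo by (simp add: D_def)
  then show ?thesis using Dpos by (simp add: field_simps)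
qed

lemma wb_nn: "e^3 / D \<ge> 0"
  by (rule divide_nonneg_pos) (use e3lo Dpos in linarith)+

lemma w1_nn: "w1 q \<ge> 0"
  using wc_nn wd_nn wb_nn by (cases q) auto

lemma w1_le2: "w1 q \<le> 2"
proof -
  have a: "e^3 \<le> 2 * D" using e3 by (simp add: D_def)
  have b: "e \<le> 3 * D" using e3 hi by (simp add: D_def)
  have c: "e^2 \<le> 3 * D" using e3 e2hi by (simp add: D_def)
  show ?thesis using a b c Dpos by (cases q) (simp_all add: field_simps)
qed

lemma divD: "X \<le> Y \<Longrightarrow> X / D \<le> Y / D"
  using Dpos by (simp add: divide_right_mono)

lemma tri1: "e^3 / D \<le> (e / D - 1) + (e^2 / D - 1)"
proof -
  have eq: "(e / D - 1) + (e^2 / D - 1) = (e + e^2 - 2*D)/D" using Dpos by (simp add: field_simps)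
  have "e^3 \<le> e + e^2 - 2 * D" using E by (simp add: D_def)
  then show ?thesis unfolding eq by (rule divD)
qed

lemma tri2: "e / D - 1 \<le> e^3 / D + (e^2 / D - 1)"
proof -
  have eq: "e^3 / D + (e^2 / D - 1) = (e^3 + e^2 - D)/D" "e / D - 1 = (e - D) / D"
    using Dpos by (simp_all add: field_simps)
  have "e - D \<le> e^3 + e^2 - D" using E hi by simp
  then show ?thesis unfolding eq by (rule divD)
qed

lemma tri3: "e^2 / D - 1 \<le> e^3 / D + (e / D - 1)"
proof -
  have eq: "e^3 / D + (e / D - 1) = (e^3 + e - D)/D" "e^2 / D - 1 = (e^2 - D) / D"
    using Dpos by (simp_all add: field_simps)
  have "e*e \<le> e*1" by (rule mult_left_mono) (use lo hi in auto)
  then have "e^2 - D \<le> e^3 + e - D" using e3lo by (simp add: power2_eq_square)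
  then show ?thesis unfolding eq by (rule divD)
qed

lemma w1_kmul: "a \<noteq> SA \<Longrightarrow> q \<noteq> SA \<Longrightarrow> w1 (kmul a q) \<le> w1 a + w1 q"
  using tri1 tri2 tri3 wc_nn wd_nn wb_nn by (cases a; cases q) simp_all

definition cost :: "st \<Rightarrow> real" where
  "cost q = w1 (st_next q True) + w1 (st_next q False)"

lemma cost_le: "q \<noteq> SA \<Longrightarrow> cost q \<le> e * (w1 q + 1)"
proof -
  have b: "e^3/D + 1 = 1/D" using Dpos by (simp add: D_def field_simps)
  have "cost SB = e * (w1 SB + 1)" unfolding cost_def by (simp add: b)
  moreover have "cost SC = e * (w1 SC + 1)" unfolding cost_def by (simp add: power2_eq_square)
  moreover have "cost SD = e * (w1 SD + 1)" unfolding cost_def by (simp add: power2_eq_square power3_eq_cube)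
  moreover have "cost SE = 0" by (simp add: cost_def)
  ultimately show "q \<noteq> SA \<Longrightarrow> cost q \<le> e * (w1 q + 1)" using lo
    by (cases q) simp_all
qed

lemma cost_SA: "cost SA = 0" by (simp add: cost_def)

lemma red_w1: "a \<noteq> SA \<Longrightarrow> sum_list (map w1 (red a qs)) \<le> w1 a + sum_list (map w1 qs)"
proof (induction qs arbitrary: a)
  case Nil then show ?case by simp
next
  case (Cons q qs)
  show ?case
  proof (cases "q = SA")
    case True
    then show ?thesis using Cons.IH[of SE] by simp
  next
    case False
    have "sum_list (map w1 (red (kmul a q) qs)) \<le> w1 (kmul a q) + sum_list (map w1 qs)"
      using Cons.IH kmul_nA[OF Cons.prems False] by blast
    also have "\<dots> \<le> w1 a + w1 q + sum_list (map w1 qs)"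
      using w1_kmul[OF Cons.prems False] by simp
    finally show ?thesis using False by simp
  qed
qed

definition N :: "st list \<Rightarrow> real" where "N qs = sum_list (map w1 (red SE qs))"

lemma N_le: "N qs \<le> sum_list (map w1 qs)"
  using red_w1[of SE qs] by (simp add: N_def)

lemma sec_cost: "sum_list (map w1 (sec x qs)) + sum_list (map w1 (sec (\<not> x) qs)) = sum_list (map cost qs)"
proof (induction qs arbitrary: x)
  case Nil then show ?case by simp
next
  case (Cons q qs)
  have "w1 (st_next q x) + w1 (st_next q (\<not> x)) = cost q"
    by (cases x) (simp_all add: cost_def)
  then show ?case using Cons.IH[of "st_out q x"] by (simp add: st_out_neg)
qed

lemma red_cost: "a \<noteq> SA \<Longrightarrow> sum_list (map cost (red a qs)) \<le> e * (sum_list (map w1 (red a qs)) + 1)"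
proof (induction qs arbitrary: a)
  case Nil then show ?case using cost_le by simp
next
  case (Cons q qs)
  show ?case
  proof (cases "q = SA")
    case True
    have "sum_list (map cost (red SE qs)) \<le> e * (sum_list (map w1 (red SE qs)) + 1)"
      using Cons.IH by simp
    moreover have "cost a \<le> e * (w1 a + 1)" using cost_le Cons.prems by simp
    ultimately show ?thesis using True by (simp add: cost_SA algebra_simps)
  next
    case False
    then show ?thesis using Cons.IH kmul_nA[OF Cons.prems False] by simp
  qed
qed

lemma contraction: "N (sec True (red SE qs)) + N (sec False (red SE qs)) \<le> e * (N qs + 1)"
proof -
  have "N (sec True (red SE qs)) + N (sec False (red SE qs))
        \<le> sum_list (map w1 (sec True (red SE qs))) + sum_list (map w1 (sec (\<not> True) (red SE qs)))"
    using N_le by (simp add: add_mono)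
  also have "\<dots> = sum_list (map cost (red SE qs))" by (rule sec_cost)
  also have "\<dots> \<le> e * (N qs + 1)" using red_cost[of SE qs] by (simp add: N_def)
  finally show ?thesis .
qed

lemma red_nA: "real (nA qs) \<le> sum_list (map w1 (red a qs))"
proof (induction qs arbitrary: a)
  case Nil then show ?case using w1_nn by (simp add: nA_def)
next
  case (Cons q qs)
  have i1: "real (nA qs) \<le> sum_list (map w1 (red SE qs))" by (rule Cons.IH)
  have i2: "real (nA qs) \<le> sum_list (map w1 (red (kmul a q) qs))" by (rule Cons.IH)
  show ?case using w1_nn[of a] i1 i2 by (simp add: nA_def)
qed

lemma N_nA: "real (nA qs) \<le> N qs"
  using red_nA by (simp add: N_def)

lemma N_nn: "0 \<le> N qs"
  using N_nA[of qs] by simp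

lemma sum_w1_le: "sum_list (map w1 qs) \<le> 2 * length qs"
  by (induction qs) (auto intro: add_mono w1_le2)

lemma N_len: "N qs \<le> 2 * length qs"
  using N_le sum_w1_le order_trans by blast

definition al where "al = ln 2 / ln (2 / e)"
definition c where "c = 2 / e"

lemma c_gt2: "c > 2" using lo hi by (simp add: c_def field_simps)

lemma al_pos: "0 < al" and al_lt1: "al < 1"
proof -
  have a: "ln 2 < ln c" using c_gt2 by simp
  have b: "0 < ln (2::real)" by simp
  have lc: "0 < ln c" using a b by linarith
  have "0 < ln 2 / ln c" using lc b by (intro divide_pos_pos) auto
  moreover have "ln 2 / ln c < 1" using a lc by (simp add: divide_less_eq)
  ultimately show "0 < al" "al < 1" by (simp_all add: al_def c_def[symmetric])
qed

lemma half: "(e/2) powr al = 1/2"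
proof -
  have l: "ln (e/2) = - ln c" using lo by (simp add: c_def ln_div)
  have "ln c > 0" using c_gt2 by simp
  then have "al * ln (e/2) = - ln 2" unfolding l by (simp add: al_def c_def[symmetric])
  then have "(e/2) powr al = exp (- ln 2)" using lo by (simp add: powr_def mult.commute)
  then show ?thesis by (simp add: exp_minus)
qed

lemma pmean: assumes x: "x > 0" and y: "y > 0"
  shows "x powr al + y powr al \<le> 2 * ((x+y)/2) powr al"
proof -
  define b where "b = (x+y)/2"
  have b: "b > 0" using x y by (simp add: b_def)
  have yx: "x powr al * b powr (1 - al) \<le> al * x + (1 - al) * b"
    by (rule Youngs_inequality_0) (use al_pos al_lt1 x b in auto)
  have yy: "y powr al * b powr (1 - al) \<le> al * y + (1 - al) * b"
    by (rule Youngs_inequality_0) (use al_pos al_lt1 y b in auto)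
  have "(x powr al + y powr al) * b powr (1 - al) = x powr al * b powr (1 - al) + y powr al * b powr (1 - al)"
    by (simp add: distrib_right)
  also have "\<dots> \<le> al * x + (1 - al) * b + (al * y + (1 - al) * b)" using add_mono[OF yx yy] .
  also have "\<dots> = 2 * b" by (simp add: b_def algebra_simps)
  also have "2 * b = 2 * b powr al * b powr (1 - al)"
    using b by (simp add: powr_add[symmetric])
  finally have "x powr al + y powr al \<le> 2 * b powr al"
    using b by (simp add: mult.assoc)
  then show ?thesis by (simp add: b_def)
qed

definition X where "X = max 12 ((2*c) powr (1/(1-al)))"

lemma X_ge: "X \<ge> 12" by (simp add: X_def)

lemma rec_ineq: assumes "x \<ge> X" shows "(x + c) powr al \<le> x powr al + 1/2"
proof -
  have x: "x > 0" using assms X_ge by simp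
  have cpos: "c > 0" using c_gt2 by simp
  have h: "(2*c) powr (1/(1-al)) \<le> x" using assms by (simp add: X_def)
  have "((2*c) powr (1/(1-al))) powr (1-al) \<le> x powr (1-al)"
    by (rule powr_mono2[OF _ _ h]) (use al_lt1 in auto)
  then have big: "2*c \<le> x powr (1-al)"
    using al_lt1 cpos by (simp add: powr_powr)
  have xc: "x + c = x * (1 + c/x)" using x by (simp add: field_simps)
  have "(x + c) powr al = (x * (1 + c/x)) powr al" by (subst xc) (rule refl)
  also have "\<dots> = x powr al * (1 + c/x) powr al" using x cpos by (simp add: powr_mult)
  also have "\<dots> \<le> x powr al * (1 + c/x) powr 1"
    by (rule mult_left_mono, rule powr_mono) (use al_lt1 x cpos in auto)
  also have "\<dots> = x powr al + c * (x powr al / x)" using x cpos by (simp add: field_simps)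
  also have "x powr al / x = 1 / x powr (1 - al)"
    using x by (simp add: powr_diff powr_minus_divide powr_add[symmetric] field_simps)
  also have "c * (1 / x powr (1 - al)) \<le> 1/2"
    using big cpos x by (simp add: field_simps)
  finally show ?thesis by simp
qed

definition A where "A = 2 * (X + 1)"

definition F where "F t = A * (t + 1) powr al - A / 2"

lemma F_base: "t \<ge> 0 \<Longrightarrow> X + 1 \<le> F t"
proof -
  assume t: "t \<ge> 0"
  have "1 \<le> (t + 1) powr al" using t al_pos by (simp add: ge_one_powr_ge_zero)
  then have "A \<le> A * (t + 1) powr al" using X_ge by (simp add: A_def)
  moreover have "X + 1 = A / 2" by (simp add: A_def)
  ultimately show ?thesis unfolding F_def by linarith
qed

lemma F_mono: "0 \<le> s \<Longrightarrow> s \<le> t \<Longrightarrow> F s \<le> F t"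
  unfolding F_def using X_ge al_pos
  by (simp add: A_def, intro mult_left_mono powr_mono2) auto

lemma main_k: "\<forall>qs. N qs \<le> real k \<longrightarrow> real (card (P qs)) \<le> F (N qs)"
proof (induction k)
  case 0
  show ?case
  proof (intro allI impI)
    fix qs assume "N qs \<le> real 0"
    then have "N qs \<le> X" using X_ge by simp
    then show "real (card (P qs)) \<le> F (N qs)"
      using card_P_nA[of qs] N_nA[of qs] F_base[OF N_nn[of qs]] by linarith
  qed
next
  case (Suc k)
  show ?case
  proof (intro allI impI)
    fix qs assume Nk: "N qs \<le> real (Suc k)"
    show "real (card (P qs)) \<le> F (N qs)"
    proof (cases "N qs \<le> X")
      case True
      then show ?thesis
        using card_P_nA[of qs] N_nA[of qs] F_base[OF N_nn[of qs]] by linarith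
    next
      case False
      define r where "r = red SE qs"
      define N1 where "N1 = N (sec True r)"
      define N2 where "N2 = N (sec False r)"
      have con: "N1 + N2 \<le> e * (N qs + 1)" using contraction[of qs] by (simp add: N1_def N2_def r_def)
      have n1: "N1 \<ge> 0" "N2 \<ge> 0" by (simp_all add: N1_def N2_def N_nn)
      have hi': "e \<le> 41/50" using hi by simp
      have "e * (N qs + 1) \<le> 41/50 * N qs + 41/50"
        using mult_right_mono[OF hi', of "N qs + 1"] N_nn[of qs] by (simp add: algebra_simps)
      then have ebig: "e * (N qs + 1) \<le> N qs - 1" using False X_ge by linarith
      have "N1 \<le> real k" "N2 \<le> real k" using con n1 ebig Nk by simp_all
      then have i1: "real (card (P (sec True r))) \<le> F N1" and i2: "real (card (P (sec False r))) \<le> F N2"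
        using Suc.IH by (simp_all add: N1_def N2_def)
      have "real (card (P qs)) \<le> real (card (P (sec True r))) + real (card (P (sec False r)))"
        using card_P_red[of qs] card_P_rec[of r] unfolding r_def by linarith
      also have "\<dots> \<le> F N1 + F N2" using i1 i2 by simp
      also have "\<dots> = A * ((N1 + 1) powr al + (N2 + 1) powr al) - A"
        by (simp add: F_def algebra_simps)
      also have "\<dots> \<le> A * (2 * ((N1 + 1 + (N2 + 1)) / 2) powr al) - A"
        using pmean[of "N1 + 1" "N2 + 1"] n1 X_ge by (simp add: A_def)
      also have "\<dots> \<le> A * (2 * ((e/2) * (N qs + 1 + c)) powr al) - A"
      proof -
        have h: "(N1 + 1 + (N2 + 1)) / 2 \<le> (e/2) * (N qs + 1 + c)"
        proof -
          have "(N1 + 1 + (N2 + 1)) / 2 \<le> (e*(N qs+1) + 2)/2"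
            by (rule divide_right_mono) (use con in linarith)+
          also have "(e*(N qs+1) + 2)/2 = (e/2)*(N qs + 1 + c)" using lo by (simp add: c_def field_simps)
          finally show ?thesis .
        qed
        have "((N1 + 1 + (N2 + 1)) / 2) powr al \<le> ((e/2) * (N qs + 1 + c)) powr al"
          by (rule powr_mono2[OF _ _ h]) (use al_pos n1 in auto)
        then show ?thesis using X_ge by (simp add: A_def)
      qed
      also have "((e/2) * (N qs + 1 + c)) powr al = 1/2 * (N qs + 1 + c) powr al"
      proof -
        have "((e/2) * (N qs + 1 + c)) powr al = (e/2) powr al * (N qs + 1 + c) powr al"
          by (rule powr_mult; use lo c_gt2 N_nn[of qs] in simp)
        then show ?thesis by (simp add: half)
      qed
      also have "A * (2 * (1/2 * (N qs + 1 + c) powr al)) - A = A * (N qs + 1 + c) powr al - A"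
        by simp
      also have "\<dots> \<le> A * ((N qs + 1) powr al + 1/2) - A"
        using rec_ineq[of "N qs + 1"] False X_ge by (simp add: A_def)
      also have "\<dots> = F (N qs)" by (simp add: F_def algebra_simps)
      finally show ?thesis .
    qed
  qed
qed

lemma main: "real (card (P qs)) \<le> F (N qs)"
  using main_k[of "nat \<lceil>N qs\<rceil>"] by (simp add: real_nat_ceiling_ge)

lemma A_pos: "A > 0" using X_ge by (simp add: A_def)

lemma delta_bound: assumes n: "n \<ge> 1" and w: "length w = n"
  shows "real (delta w) \<le> A * (3 * real n) powr al"
proof -
  have "real (delta w) = real (card (P (map st_of w)))" by (simp add: delta_P)
  also have "\<dots> \<le> F (N (map st_of w))" by (rule main)
  also have "\<dots> \<le> F (2 * real n)"
    by (rule F_mono) (use N_nn N_len[of "map st_of w"] w in auto)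
  also have "\<dots> \<le> A * (2 * real n + 1) powr al" using A_pos by (simp add: F_def)
  also have "\<dots> \<le> A * (3 * real n) powr al"
  proof -
    have "(2 * real n + 1) powr al \<le> (3 * real n) powr al"
      by (rule powr_mono2) (use al_pos n in auto)
    then show ?thesis using A_pos by simp
  qed
  finally show ?thesis .
qed

lemma Delta_bound: assumes n: "n \<ge> 1"
  shows "real (Delta n) \<le> A * (3 * real n) powr al"
proof -
  have S: "{delta w | w. length w = n} = delta ` {w. set w \<subseteq> UNIV \<and> length w = n}" by auto
  have "finite {w :: gen list. set w \<subseteq> UNIV \<and> length w = n}"
    by (rule finite_lists_length_eq) (simp add: gen_UNIV)
  then have fin: "finite {delta w | w. length w = n}" unfolding S by simp
  have ne: "{delta w | w. length w = n} \<noteq> {}" by (auto intro!: exI[of _ "replicate n GA"])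
  have "Delta n \<in> {delta w | w. length w = n}" unfolding Delta_def by (rule Max_in[OF fin ne])
  then obtain w where "length w = n" "Delta n = delta w" by auto
  then show ?thesis using delta_bound[OF n] by simp
qed

end

lemma eta_bounds: fixes \<eta> :: real assumes "\<eta> ^ 3 + \<eta> ^ 2 + \<eta> - 2 = 0"
  shows "0.8 < \<eta>" "\<eta> < 0.82"
proof -
  have q1: "\<eta>^2 + 1.8*\<eta> + 2.44 = (\<eta> + 0.9)^2 + 1.63" by (simp add: power2_eq_square algebra_simps)
  have q1p: "\<eta>^2 + 1.8*\<eta> + 2.44 > 0" unfolding q1 by (simp add: add_nonneg_pos)
  have f1: "(\<eta> - 0.8) * (\<eta>^2 + 1.8*\<eta> + 2.44) = \<eta>^3 + \<eta>^2 + \<eta> - 1.952"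
    by (simp add: power2_eq_square power3_eq_cube field_simps)
  then have "(\<eta> - 0.8) * (\<eta>^2 + 1.8*\<eta> + 2.44) > 0" using assms by simp
  then show "0.8 < \<eta>" using q1p by (simp add: zero_less_mult_iff)
  have q2: "\<eta>^2 + 1.82*\<eta> + 2.4924 = (\<eta> + 0.91)^2 + 1.6643" by (simp add: power2_eq_square algebra_simps)
  have q2p: "\<eta>^2 + 1.82*\<eta> + 2.4924 > 0" unfolding q2 by (simp add: add_nonneg_pos)
  have f2: "(\<eta> - 0.82) * (\<eta>^2 + 1.82*\<eta> + 2.4924) = \<eta>^3 + \<eta>^2 + \<eta> - 2.043768"
    by (simp add: power2_eq_square power3_eq_cube field_simps)
  then have "(\<eta> - 0.82) * (\<eta>^2 + 1.82*\<eta> + 2.4924) < 0" using assms by simp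
  then show "\<eta> < 0.82" using q2p by (simp add: mult_less_0_iff)
qed

theorem proposition4p4:
  fixes \<eta> :: real
  assumes "\<eta> ^ 3 + \<eta> ^ 2 + \<eta> - 2 = 0"
  shows "\<exists>C>0. \<forall>\<^sub>F n in sequentially.
           real (Delta n) \<le> (C * real n) powr (ln 2 / ln (2 / \<eta>))"
proof -
  interpret g: grig \<eta>
    using eta_bounds[OF assms] assms by unfold_locales simp_all
  define C where "C = 3 * g.A powr (1 / g.al)"
  have Cpos: "C > 0" using g.A_pos by (simp add: C_def)
  have "\<forall>\<^sub>F n in sequentially. real (Delta n) \<le> (C * real n) powr g.al"
  proof (rule eventually_sequentiallyI[of 1])
    fix n :: nat assume n: "1 \<le> n"
    have "(C * real n) powr g.al = (g.A powr (1 / g.al)) powr g.al * (3 * real n) powr g.al"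
      by (simp add: C_def powr_mult mult.assoc mult.left_commute)
    also have "(g.A powr (1 / g.al)) powr g.al = g.A"
      using g.A_pos g.al_pos by (simp add: powr_powr)
    finally have "(C * real n) powr g.al = g.A * (3 * real n) powr g.al" .
    then show "real (Delta n) \<le> (C * real n) powr g.al" using g.Delta_bound[OF n] by simp
  qed
  then show ?thesis using Cpos unfolding g.al_def by blast
qed


end
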